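(* Let $\mathbb{F}_q$ be a finite field and let $z_1,\dots,z_n$ be indeterminates. For $k=1,\dots,n$ let $$f_k=\prod_{(\alpha_1,\dots,\alpha_{k-1})\in\mathbb{F}_q^{k-1}}\bigl(z_k+\alpha_{k-1}z_{k-1}+\cdots+\alpha_1z_1\bigr)\in\mathbb{F}_q[z_1,\dots,z_n]$$ (so $f_1=z_1$). Then for each $k=1,\dots,n$, the differential $df_k=\sum_{l=1}^n\frac{\partial f_k}{\partial z_l}dz_l$ is divisible by $\prod_{i<k}f_i^{\,q-2}$, i.e. every partial derivative $\frac{\partial f_k}{\partial z_l}$ is divisible by $\prod_{i<k}f_i^{\,q-2}$.
   Context: The $f_k$ are the basic invariants of the group of lower triangular unipotent matrices $\mathrm{U}_n(\mathbb{F}_q)$ acting on $V=\mathbb{F}_q^n$ with $z_1,\dots,z_n$ the dual basis of $V^*$. *)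

theory Defs
  imports Main "HOL-Library.Poly_Mapping"
begin

text \<open>Multivariate polynomials over 'a in the variables z_1, z_2, ... (indexed by nat):
  a polynomial is a finitely supported map from monomials (exponent vectors
  finitely supported nat to nat maps) to coefficients.\<close>

type_synonym 'a mpoly = "((nat, nat) poly_mapping, 'a) poly_mapping"

definition mvar :: "nat \<Rightarrow> 'a::comm_ring_1 mpoly" where
  "mvar i = Poly_Mapping.single (Poly_Mapping.single i 1) 1"

definition mconst :: "'a::comm_ring_1 \<Rightarrow> 'a mpoly" where
  "mconst c = Poly_Mapping.single 0 c"

definition mpderiv :: "nat \<Rightarrow> 'a::comm_ring_1 mpoly \<Rightarrow> 'a mpoly" where
  "mpderiv l p = (\<Sum>m\<in>Poly_Mapping.keys p.
      Poly_Mapping.single (m - Poly_Mapping.single l 1)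
        (of_nat (Poly_Mapping.lookup m l) * Poly_Mapping.lookup p m))"

definition fk :: "'a::{field,finite} itself \<Rightarrow> nat \<Rightarrow> 'a mpoly" where
  "fk _ k = (\<Prod>\<alpha>\<in>{\<alpha> :: nat \<Rightarrow> 'a. \<forall>i. i \<notin> {1..<k} \<longrightarrow> \<alpha> i = 0}.
      mvar k + (\<Sum>i\<in>{1..<k}. mconst (\<alpha> i) * mvar i))"

end

theory Submission
  imports Defs "HOL-Computational_Algebra.Polynomial" "HOL-Library.Cardinality"
begin


lemma card_ge2: "2 \<le> card (UNIV::'a::{field,finite} set)"
proof -
  have "card {0::'a, 1} \<le> CARD('a)" by (rule card_mono) auto
  thus ?thesis by simp
qed

lemma pow_card: fixes x :: "'a::{field,finite}" shows "x ^ CARD('a) = x"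
proof (cases "x = 0")
  case False
  have "x * (\<Prod>y\<in>UNIV-{0}. x * y) = x * x ^ (card (UNIV :: 'a set) - 1) * \<Prod>(UNIV-{0})"
    by (simp add: prod.distrib mult_ac)
  also have "x * x ^ (card (UNIV :: 'a set) - 1) = x ^ Suc (card (UNIV :: 'a set) - 1)"
    by (subst power_Suc) auto
  also have "Suc (card (UNIV :: 'a set) - 1) = card (UNIV :: 'a set)"
    using finite_UNIV_card_ge_0[where ?'a = 'a] by simp
  also have "(\<Prod>y\<in>UNIV-{0}. x * y) = (\<Prod>y\<in>UNIV-{0}. y)"
    by (rule prod.reindex_bij_witness[of _ "\<lambda>y. y / x" "\<lambda>y. x * y"]) (use False in auto)
  finally show ?thesis
    by simp
qed (use finite_UNIV_card_ge_0[where ?'a = 'a] in auto)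

lemma of_nat_card: "(of_nat CARD('a) :: 'a::{field,finite}) = 0"
proof -
  have "(\<Sum>x\<in>UNIV. x + (1::'a)) = (\<Sum>x\<in>UNIV. x)"
    by (rule sum.reindex_bij_witness[of _ "\<lambda>y. y - 1" "\<lambda>y. y + 1"]) auto
  thus ?thesis by (simp add: sum.distrib)
qed

lemma prodP: "(\<Prod>c\<in>(UNIV::'a::{field,finite} set). [:c,1:]) = monom 1 CARD('a) - monom 1 1"
proof (rule poly_eqI_degree_lead_coeff[where A=UNIV and n="CARD('a)"])
  have dg: "degree (\<Prod>c\<in>(UNIV::'a set). [:c,1:]) = CARD('a)"
    by (subst degree_prod_eq_sum_degree) auto
  show "coeff (\<Prod>c\<in>(UNIV::'a set). [:c,1:]) CARD('a) = coeff (monom 1 CARD('a) - monom (1::'a) 1) CARD('a)"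
    using dg lead_coeff_prod[of "\<lambda>c. [:c,1::'a:]" UNIV] card_ge2[where 'a='a] by simp
  show "degree (\<Prod>c\<in>(UNIV::'a set). [:c,1:]) \<le> CARD('a)" using dg by simp
  show "degree (monom 1 CARD('a) - monom (1::'a) 1) \<le> CARD('a)"
    using card_ge2[where 'a='a] degree_diff_le degree_monom_le
    by (metis (no_types, lifting) dual_order.trans le_simps(3) numeral_2_eq_2 one_le_numeral)
  show "CARD('a) \<le> card (UNIV::'a set)" by simp
  fix z :: 'a
  have "poly (\<Prod>c\<in>(UNIV::'a set). [:c,1:]) z = (\<Prod>c\<in>UNIV. c + z)" by (simp add: poly_prod)
  also have "\<dots> = 0" by (rule prod_zero) (auto intro: exI[of _ "-z"])
  finally show "poly (\<Prod>c\<in>(UNIV::'a set). [:c,1:]) z = poly (monom 1 CARD('a) - monom 1 1) z"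
    by (simp add: poly_monom pow_card)
qed

lemma linpow: "[:1,1::'a::{field,finite}:] ^ CARD('a) = monom 1 CARD('a) + 1"
proof (rule poly_eqI_degree_lead_coeff[where A=UNIV and n="CARD('a)"])
  show "coeff ([:1,1::'a:] ^ CARD('a)) CARD('a) = coeff (monom 1 CARD('a) + 1) CARD('a)"
    using card_ge2[where 'a='a] by (simp add: coeff_linear_power)
  show "degree ([:1,1::'a:] ^ CARD('a)) \<le> CARD('a)" by (simp add: degree_linear_power)
  show "degree (monom 1 CARD('a) + (1::'a poly)) \<le> CARD('a)"
    by (metis degree_add_le degree_monom_le degree_1 le0)
  show "CARD('a) \<le> card (UNIV::'a set)" by simp
  fix z :: 'a
  show "poly ([:1,1::'a:] ^ CARD('a)) z = poly (monom 1 CARD('a) + 1) z"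
    by (simp add: poly_monom pow_card add.commute)
qed



lemma mconst_add: "mconst (a + b) = (mconst a + mconst b :: 'a::comm_ring_1 mpoly)"
  by (simp add: mconst_def single_add)
lemma mconst_mult: "mconst (a * b) = (mconst a * mconst b :: 'a::comm_ring_1 mpoly)"
  by (simp add: mconst_def mult_single)
lemma mconst_diff: "mconst (a - b) = (mconst a - mconst b :: 'a::comm_ring_1 mpoly)"
  by (simp add: mconst_def single_diff)
lemma mconst_0[simp]: "mconst 0 = (0::'a::comm_ring_1 mpoly)"
  by (simp add: mconst_def)
lemma mconst_1[simp]: "mconst 1 = (1::'a::comm_ring_1 mpoly)"
  by (simp add: mconst_def)
lemma mconst_power: "mconst (a ^ n) = (mconst a ^ n :: 'a::comm_ring_1 mpoly)"
  by (induct n) (simp_all add: mconst_mult)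
lemma mconst_of_nat: "mconst (of_nat n) = (of_nat n :: 'a::comm_ring_1 mpoly)"
  by (simp add: mconst_def)

definition hom :: "nat \<Rightarrow> 'a::comm_ring_1 poly \<Rightarrow> 'a mpoly \<Rightarrow> 'a mpoly \<Rightarrow> 'a mpoly" where
  "hom d p A B = (\<Sum>i\<le>d. mconst (coeff p i) * A ^ i * B ^ (d - i))"

lemma hom_add: "hom d (p + r) A B = hom d p A B + hom d r A B"
  by (simp add: hom_def mconst_add algebra_simps sum.distrib)

lemma hom_diff: "hom d (p - r) A B = hom d p A B - hom d r A B"
  by (simp add: hom_def mconst_diff algebra_simps sum_subtractf)

lemma hom_monom: "i \<le> d \<Longrightarrow> hom d (monom c i) A B = mconst c * A ^ i * B ^ (d - i)"
proof -
  assume "i \<le> d"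
  have "hom d (monom c i) A B = (\<Sum>j\<le>d. if i = j then mconst c * A^i*B^(d-i) else 0)"
    unfolding hom_def by (rule sum.cong) auto
  then show ?thesis using \<open>i \<le> d\<close> by simp
qed

lemma hom_1: "hom d 1 A B = B ^ d"
  using hom_monom[of 0 d 1 A B] by (simp add: monom_0 one_pCons)

lemma hom_one: "hom 0 1 A B = 1"
  by (simp add: hom_def)

lemma hom_step:
  assumes "degree p \<le> d"
  shows "hom (Suc d) (p * [:c,1:]) A B = hom d p A B * (A + mconst c * B)"
proof -
  have "p * [:c,1:] = smult c p + pCons 0 p" by simp
  have e1: "hom (Suc d) (smult c p) A B = mconst c * B * hom d p A B"
  proof -
    have "hom (Suc d) (smult c p) A B = (\<Sum>i\<le>Suc d. mconst c * mconst (coeff p i) * A ^ i * B ^ (Suc d - i))"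
      by (simp add: hom_def mconst_mult)
    also have "\<dots> = (\<Sum>i\<le>d. mconst c * mconst (coeff p i) * A ^ i * B ^ (Suc d - i))"
      using assms by (simp add: coeff_eq_0)
    also have "\<dots> = (\<Sum>i\<le>d. mconst c * B * (mconst (coeff p i) * A ^ i * B ^ (d - i)))"
      by (rule sum.cong) (auto simp: Suc_diff_le algebra_simps)
    finally show ?thesis by (simp add: hom_def sum_distrib_left)
  qed
  have e2: "hom (Suc d) (pCons 0 p) A B = A * hom d p A B"
  proof -
    have "hom (Suc d) (pCons 0 p) A B = (\<Sum>i\<le>Suc d. mconst (coeff (pCons 0 p) i) * A ^ i * B ^ (Suc d - i))"
      by (simp add: hom_def)
    also have "\<dots> = (\<Sum>i\<le>d. mconst (coeff p i) * A ^ Suc i * B ^ (d - i))"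
      by (subst sum.atMost_Suc_shift) simp
    also have "\<dots> = A * hom d p A B"
      by (simp add: hom_def sum_distrib_left algebra_simps)
    finally show ?thesis .
  qed
  have "hom (Suc d) (p * [:c,1:]) A B = hom (Suc d) (smult c p) A B + hom (Suc d) (pCons 0 p) A B"
    by (simp add: hom_add)
  also have "\<dots> = hom d p A B * (A + mconst c * B)"
    using e1 e2 by (simp add: algebra_simps)
  finally show ?thesis .
qed

lemma hom_prod:
  fixes A B :: "'a::field mpoly"
  shows "finite S \<Longrightarrow> hom (card S) (\<Prod>c\<in>S. [:c,1:]) A B = (\<Prod>c\<in>S. A + mconst c * B)"
proof (induction S rule: finite_induct)
  case empty then show ?case by (simp add: hom_one)
next
  case (insert x S)
  have dg: "degree (\<Prod>c\<in>S. [:c,1::'a:]) \<le> card S"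
    by (subst degree_prod_eq_sum_degree) auto
  have "hom (card (insert x S)) (\<Prod>c\<in>insert x S. [:c,1:]) A B
      = hom (Suc (card S)) ((\<Prod>c\<in>S. [:c,1:]) * [:x,1:]) A B"
    using insert by (simp add: mult.commute)
  also have "\<dots> = hom (card S) (\<Prod>c\<in>S. [:c,1:]) A B * (A + mconst x * B)"
    by (rule hom_step[OF dg])
  finally show ?case using insert by (simp add: mult.commute)
qed

lemma hom_pow:
  fixes A B :: "'a::field mpoly"
  shows "hom n ([:1,1:] ^ n) A B = (A + B) ^ n"
proof (induction n)
  case 0 then show ?case by (simp add: hom_one)
next
  case (Suc n)
  have "hom (Suc n) ([:1,1:] ^ n * [:1,1:]) A B = hom n ([:1,1:] ^ n) A B * (A + mconst 1 * B)"
    by (rule hom_step) (simp add: degree_linear_power)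
  then show ?case using Suc by (simp add: mult.commute power_Suc2)
qed

lemma key_prod:
  fixes A B :: "'a::{field,finite} mpoly"
  shows "(\<Prod>c\<in>UNIV. A + mconst c * B) = A ^ CARD('a) - B ^ (CARD('a) - 1) * A"
proof -
  have "(\<Prod>c\<in>UNIV. A + mconst c * B) = hom CARD('a) (monom 1 CARD('a) - monom 1 1) A B"
    using hom_prod[of "UNIV::'a set" A B] prodP[where 'a='a] by simp
  also have "\<dots> = A ^ CARD('a) - B ^ (CARD('a) - 1) * A"
    using card_ge2[where 'a='a] by (simp add: hom_diff hom_monom mult.commute)
  finally show ?thesis .
qed

lemma frob:
  fixes A B :: "'a::{field,finite} mpoly"
  shows "(A + B) ^ CARD('a) = A ^ CARD('a) + B ^ CARD('a)"
proof -
  have "(A + B) ^ CARD('a) = hom CARD('a) (monom 1 CARD('a) + monom 1 0) A B"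
    using hom_pow[of "CARD('a)" A B] linpow[where 'a='a] by (simp add: monom_0 one_pCons)
  also have "\<dots> = A ^ CARD('a) + B ^ CARD('a)"
    by (simp add: hom_add hom_monom monom_0 one_pCons[symmetric] hom_1)
  finally show ?thesis .
qed



lemma mpderiv_superset:
  assumes "finite S" "Poly_Mapping.keys p \<subseteq> S"
  shows "mpderiv l p = (\<Sum>m\<in>S. Poly_Mapping.single (m - Poly_Mapping.single l 1)
        (of_nat (Poly_Mapping.lookup m l) * Poly_Mapping.lookup p m))"
  unfolding mpderiv_def
  by (rule sum.mono_neutral_left) (use assms in \<open>auto simp: in_keys_iff\<close>)

lemma mpderiv_add: "mpderiv l (p + r) = mpderiv l p + mpderiv l (r :: 'a::comm_ring_1 mpoly)"
proof -
  let ?S = "Poly_Mapping.keys p \<union> Poly_Mapping.keys r"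
  have fin: "finite ?S" by simp
  have k: "Poly_Mapping.keys (p + r) \<subseteq> ?S" by (rule keys_add)
  show ?thesis
    using mpderiv_superset[OF fin k, of l] mpderiv_superset[OF fin, of p l] mpderiv_superset[OF fin, of r l]
    by (simp add: lookup_add algebra_simps single_add sum.distrib)
qed

lemma mpderiv_0[simp]: "mpderiv l 0 = 0"
  by (simp add: mpderiv_def)

lemma mpderiv_single: "mpderiv l (Poly_Mapping.single m (c::'a::comm_ring_1)) =
   Poly_Mapping.single (m - Poly_Mapping.single l 1) (of_nat (Poly_Mapping.lookup m l) * c)"
  by (subst mpderiv_superset[of "{m}"]) auto

lemma mpderiv_sum: "mpderiv l (\<Sum>i\<in>I. f i) = (\<Sum>i\<in>I. mpderiv l (f i :: 'a::comm_ring_1 mpoly))"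
  by (induction I rule: infinite_finite_induct) (auto simp: mpderiv_add)

lemma mpderiv_uminus: "mpderiv l (- p) = - mpderiv l (p :: 'a::comm_ring_1 mpoly)"
  using mpderiv_add[of l "-p" p] by (simp add: eq_neg_iff_add_eq_0)

lemma mpderiv_diff: "mpderiv l (p - r) = mpderiv l p - mpderiv l (r :: 'a::comm_ring_1 mpoly)"
  using mpderiv_add[of l p "-r"] by (simp add: mpderiv_uminus)

lemma poly_mapping_expand: "p = (\<Sum>m\<in>Poly_Mapping.keys p. Poly_Mapping.single m (Poly_Mapping.lookup p m))"
proof (rule poly_mapping_eqI)
  fix k
  show "Poly_Mapping.lookup p k = Poly_Mapping.lookup (\<Sum>m\<in>Poly_Mapping.keys p. Poly_Mapping.single m (Poly_Mapping.lookup p m)) k"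
    by (simp add: lookup_sum lookup_single when_def in_keys_iff)
qed

lemma exp_shift:
  assumes "0 < Poly_Mapping.lookup m l"
  shows "m - Poly_Mapping.single l 1 + n = m + n - Poly_Mapping.single l (1::nat)"
proof (rule poly_mapping_eqI)
  fix k
  show "Poly_Mapping.lookup (m - Poly_Mapping.single l 1 + n) k = Poly_Mapping.lookup (m + n - Poly_Mapping.single l 1) k"
    using assms by (cases "k = l") (auto simp: lookup_add lookup_minus lookup_single)
qed

lemma single_shift:
  "Poly_Mapping.single (m - Poly_Mapping.single l 1 + n) (of_nat (Poly_Mapping.lookup m l) * c) =
   Poly_Mapping.single (m + n - Poly_Mapping.single l 1) (of_nat (Poly_Mapping.lookup m l) * (c::'a::comm_ring_1))"
proof (cases "Poly_Mapping.lookup m l = 0")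
  case True then show ?thesis by simp
next
  case False
  hence "0 < Poly_Mapping.lookup m l" by simp
  show ?thesis by (simp only: exp_shift[OF \<open>0 < Poly_Mapping.lookup m l\<close>])
qed

lemma leibniz_single:
  "mpderiv l (Poly_Mapping.single m a * Poly_Mapping.single n b) =
   mpderiv l (Poly_Mapping.single m a) * Poly_Mapping.single n b + Poly_Mapping.single m a * mpderiv l (Poly_Mapping.single n (b::'a::comm_ring_1))"
proof -
  have "mpderiv l (Poly_Mapping.single m a) * Poly_Mapping.single n b
      = Poly_Mapping.single (m - Poly_Mapping.single l 1 + n) (of_nat (Poly_Mapping.lookup m l) * (a * b))"
    by (simp add: mpderiv_single mult_single mult.assoc)
  also have "\<dots> = Poly_Mapping.single (m + n - Poly_Mapping.single l 1) (of_nat (Poly_Mapping.lookup m l) * (a * b))"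
    by (rule single_shift)
  finally have 1: "mpderiv l (Poly_Mapping.single m a) * Poly_Mapping.single n b = \<dots>" .
  have "Poly_Mapping.single m a * mpderiv l (Poly_Mapping.single n b)
      = Poly_Mapping.single (n - Poly_Mapping.single l 1 + m) (of_nat (Poly_Mapping.lookup n l) * (a * b))"
    by (simp add: mpderiv_single mult_single algebra_simps)
  also have "\<dots> = Poly_Mapping.single (m + n - Poly_Mapping.single l 1) (of_nat (Poly_Mapping.lookup n l) * (a * b))"
    by (subst single_shift) (simp add: add.commute)
  finally have 2: "Poly_Mapping.single m a * mpderiv l (Poly_Mapping.single n b) = \<dots>" .
  have 3: "mpderiv l (Poly_Mapping.single m a * Poly_Mapping.single n b) =
     Poly_Mapping.single (m + n - Poly_Mapping.single l 1) (of_nat (Poly_Mapping.lookup m l) * (a * b))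
   + Poly_Mapping.single (m + n - Poly_Mapping.single l 1) (of_nat (Poly_Mapping.lookup n l) * (a * b))"
    by (simp only: mult_single mpderiv_single lookup_add of_nat_add distrib_right single_add)
  show ?thesis by (simp only: 1 2 3)
qed

lemma leibniz_single_left:
  "mpderiv l (Poly_Mapping.single m a * r) =
   mpderiv l (Poly_Mapping.single m a) * r + Poly_Mapping.single m a * mpderiv l (r::'a::comm_ring_1 mpoly)"
proof -
  let ?E = "\<lambda>n. Poly_Mapping.single n (Poly_Mapping.lookup r n)"
  have "mpderiv l (Poly_Mapping.single m a * (\<Sum>n\<in>Poly_Mapping.keys r. ?E n))
     = mpderiv l (Poly_Mapping.single m a) * (\<Sum>n\<in>Poly_Mapping.keys r. ?E n)
       + Poly_Mapping.single m a * mpderiv l (\<Sum>n\<in>Poly_Mapping.keys r. ?E n)"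
    by (simp add: sum_distrib_left mpderiv_sum leibniz_single sum.distrib)
  then show ?thesis using poly_mapping_expand[of r] by simp
qed

lemma leibniz:
  "mpderiv l (p * r) = mpderiv l p * r + p * mpderiv l (r::'a::comm_ring_1 mpoly)"
proof -
  let ?E = "\<lambda>n. Poly_Mapping.single n (Poly_Mapping.lookup p n)"
  have "mpderiv l ((\<Sum>n\<in>Poly_Mapping.keys p. ?E n) * r)
     = mpderiv l (\<Sum>n\<in>Poly_Mapping.keys p. ?E n) * r
       + (\<Sum>n\<in>Poly_Mapping.keys p. ?E n) * mpderiv l r"
    by (simp add: sum_distrib_right mpderiv_sum leibniz_single_left sum.distrib)
  then show ?thesis using poly_mapping_expand[of p] by simp
qed

lemma mpderiv_power:
  "mpderiv l (p ^ Suc n) = of_nat (Suc n) * p ^ n * mpderiv l (p::'a::comm_ring_1 mpoly)"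
proof (induction n)
  case 0 then show ?case by simp
next
  case (Suc n)
  have "mpderiv l (p ^ Suc (Suc n)) = mpderiv l p * p ^ Suc n + p * mpderiv l (p ^ Suc n)"
    by (simp add: leibniz)
  also have "\<dots> = of_nat (Suc (Suc n)) * p ^ Suc n * mpderiv l p"
    unfolding Suc.IH by (simp add: algebra_simps)
  finally show ?case .
qed



definition Aset :: "nat \<Rightarrow> (nat \<Rightarrow> 'a::zero) set" where
  "Aset k = {\<alpha>. \<forall>i. i \<notin> {1..<k} \<longrightarrow> \<alpha> i = 0}"

definition V :: "nat \<Rightarrow> 'a::{field,finite} mpoly \<Rightarrow> 'a mpoly" where
  "V k X = (\<Prod>\<alpha>\<in>Aset k. X + (\<Sum>i\<in>{1..<k}. mconst (\<alpha> i) * mvar i))"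

lemma fk_V: "fk TYPE('a::{field,finite}) k = V k (mvar k)"
  by (simp add: fk_def V_def Aset_def)

lemma finite_Aset: "finite (Aset k :: (nat \<Rightarrow> 'a::{zero,finite}) set)"
proof -
  have "Aset k = {f :: nat \<Rightarrow> 'a. \<forall>x. (x \<in> {1..<k} \<longrightarrow> f x \<in> UNIV) \<and> (x \<notin> {1..<k} \<longrightarrow> f x = 0)}"
    by (auto simp: Aset_def)
  then show ?thesis using finite_set_of_finite_funs[of "{1..<k}" "UNIV::'a set" 0] by simp
qed

lemma V1: "V 1 X = X"
proof -
  have "Aset 1 = {\<lambda>_. 0::'a}" by (auto simp: Aset_def)
  then show ?thesis by (simp add: V_def)
qed

lemma V1'[simp]: "V (Suc 0) X = X"
  using V1 by simp

lemma V_split: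
  assumes "1 \<le> k"
  shows "V (Suc k) X = (\<Prod>c\<in>UNIV. V k (X + mconst c * mvar k))"
proof -
  let ?F = "\<lambda>k (\<alpha>::nat \<Rightarrow> 'a). X + (\<Sum>i\<in>{1..<k}. mconst (\<alpha> i) * mvar i)"
  let ?g = "\<lambda>(\<beta>::nat\<Rightarrow>'a, c::'a). \<beta>(k := c)"
  have img: "Aset (Suc k) = ?g ` (Aset k \<times> UNIV)"
  proof
    show "Aset (Suc k) \<subseteq> ?g ` (Aset k \<times> UNIV)"
    proof
      fix \<alpha> :: "nat \<Rightarrow> 'a" assume a: "\<alpha> \<in> Aset (Suc k)"
      have "\<alpha>(k := 0) \<in> Aset k" using a by (auto simp: Aset_def)
      moreover have "\<alpha> = ?g (\<alpha>(k := 0), \<alpha> k)" by simp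
      ultimately show "\<alpha> \<in> ?g ` (Aset k \<times> UNIV)" by blast
    qed
    show "?g ` (Aset k \<times> UNIV) \<subseteq> Aset (Suc k)"
      using assms by (auto simp: Aset_def)
  qed
  have inj: "inj_on ?g (Aset k \<times> UNIV)"
  proof (rule inj_onI, clarify)
    fix \<beta> c \<beta>' c'
    assume "\<beta> \<in> Aset k" "\<beta>' \<in> Aset k" and e: "\<beta>(k := c) = \<beta>'(k := c')"
    have "c = c'" using fun_cong[OF e, of k] by simp
    moreover have "\<beta> = \<beta>'"
    proof
      fix i show "\<beta> i = \<beta>' i"
        using fun_cong[OF e, of i] \<open>\<beta> \<in> Aset k\<close> \<open>\<beta>' \<in> Aset k\<close>
        by (cases "i = k") (auto simp: Aset_def)
    qed
    ultimately show "\<beta> = \<beta>' \<and> c = c'" by simp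
  qed
  have tm: "?F (Suc k) (\<beta>(k := c)) = (X + mconst c * mvar k) + (\<Sum>i\<in>{1..<k}. mconst (\<beta> i) * mvar i)"
    for \<beta> :: "nat \<Rightarrow> 'a" and c
  proof -
    have "{1..<Suc k} = insert k {1..<k}" using assms by auto
    then have "(\<Sum>i\<in>{1..<Suc k}. mconst ((\<beta>(k := c)) i) * mvar i)
       = mconst c * mvar k + (\<Sum>i\<in>{1..<k}. mconst ((\<beta>(k := c)) i) * mvar i)"
      by simp
    also have "(\<Sum>i\<in>{1..<k}. mconst ((\<beta>(k := c)) i) * mvar i) = (\<Sum>i\<in>{1..<k}. mconst (\<beta> i) * mvar i)"
      by (rule sum.cong) auto
    finally show ?thesis by (simp add: algebra_simps)
  qed
  have "V (Suc k) X = (\<Prod>\<alpha>\<in>Aset (Suc k). ?F (Suc k) \<alpha>)" by (simp add: V_def)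
  also have "\<dots> = (\<Prod>p\<in>Aset k \<times> UNIV. ?F (Suc k) (?g p))"
    unfolding img by (simp add: prod.reindex[OF inj] comp_def)
  also have "\<dots> = (\<Prod>p\<in>Aset k \<times> UNIV. (X + mconst (snd p) * mvar k) + (\<Sum>i\<in>{1..<k}. mconst (fst p i) * mvar i))"
    apply (rule prod.cong[OF refl])
    subgoal for p by (cases p) (simp only: case_prod_conv tm fst_conv snd_conv)
    done
  also have "\<dots> = (\<Prod>\<beta>\<in>Aset k. \<Prod>c\<in>UNIV. (X + mconst c * mvar k) + (\<Sum>i\<in>{1..<k}. mconst (\<beta> i) * mvar i))"
    unfolding prod.cartesian_product by (simp add: case_prod_beta)
  also have "\<dots> = (\<Prod>c\<in>UNIV. \<Prod>\<beta>\<in>Aset k. (X + mconst c * mvar k) + (\<Sum>i\<in>{1..<k}. mconst (\<beta> i) * mvar i))"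
    by (rule prod.swap)
  also have "\<dots> = (\<Prod>c\<in>UNIV. V k (X + mconst c * mvar k))"
    by (simp add: V_def)
  finally show ?thesis .
qed

lemma V_rec:
  assumes "1 \<le> k"
    and add: "\<And>X Y. V k (X + Y) = V k X + V k (Y :: 'a::{field,finite} mpoly)"
    and hm: "\<And>c X. V k (mconst c * X) = mconst c * V k (X :: 'a mpoly)"
  shows "V (Suc k) (X::'a mpoly) = V k X ^ CARD('a) - V k (mvar k) ^ (CARD('a) - 1) * V k X"
proof -
  have "V (Suc k) X = (\<Prod>c\<in>UNIV. V k (X + mconst c * mvar k))"
    by (rule V_split[OF assms(1)])
  also have "\<dots> = (\<Prod>c\<in>UNIV. V k X + mconst c * V k (mvar k))"
    by (simp add: add hm)
  also have "\<dots> = V k X ^ CARD('a) - V k (mvar k) ^ (CARD('a) - 1) * V k X"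
    by (rule key_prod)
  finally show ?thesis .
qed

lemma V_lin:
  assumes "1 \<le> k"
  shows "(\<forall>X Y. V k (X + Y) = V k X + V k (Y :: 'a::{field,finite} mpoly)) \<and>
         (\<forall>c X. V k (mconst c * X) = mconst c * V k (X :: 'a mpoly))"
  using assms
proof (induction k rule: dec_induct)
  case base then show ?case by (simp add: V1)
next
  case (step k)
  let ?q = "CARD('a)"
  let ?C = "V k (mvar k) :: 'a mpoly"
  have R: "V (Suc k) X = V k X ^ ?q - ?C ^ (?q - 1) * V k X" for X
    using step by (intro V_rec) auto
  have addk: "V k (X + Y) = V k X + V k Y" for X Y :: "'a mpoly" using step.IH by blast
  have hmk: "V k (mconst c * X) = mconst c * V k X" for c and X :: "'a mpoly" using step.IH by blast
  have A: "V (Suc k) (X + Y) = V (Suc k) X + V (Suc k) Y" for X Y :: "'a mpoly"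
    by (simp only: R addk frob) (simp add: algebra_simps)
  have H: "V (Suc k) (mconst c * X) = mconst c * V (Suc k) X" for c and X :: "'a mpoly"
  proof -
    have "(mconst c * V k X) ^ ?q = mconst c * V k X ^ ?q"
      by (simp add: power_mult_distrib mconst_power[symmetric] pow_card)
    then show ?thesis by (simp only: R hmk) (simp add: algebra_simps)
  qed
  show ?case using A H by blast
qed

lemma V_rec': "1 \<le> k \<Longrightarrow> V (Suc k) X = V k X ^ CARD('a) - V k (mvar k) ^ (CARD('a) - 1) * V k (X::'a::{field,finite} mpoly)"
  using V_lin[of k] by (intro V_rec) auto

lemma of_nat_card_mpoly: "(of_nat CARD('a) :: 'a::{field,finite} mpoly) = 0"
  by (simp add: mconst_of_nat[symmetric] of_nat_card)

lemma main:
  assumes "1 \<le> k"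
  shows "\<forall>j. (\<Prod>i\<in>{1..<k}. V i (mvar i) ^ (CARD('a) - 2)) dvd mpderiv l (V k (mvar j) :: 'a::{field,finite} mpoly)"
  using assms
proof (induction k rule: dec_induct)
  case base then show ?case by simp
next
  case (step k)
  let ?q = "CARD('a)"
  let ?C = "V k (mvar k) :: 'a mpoly"
  let ?P = "(\<Prod>i\<in>{1..<k}. V i (mvar i) ^ (?q - 2)) :: 'a mpoly"
  have q2: "2 \<le> ?q" by (rule card_ge2)
  have Pk: "(\<Prod>i\<in>{1..<Suc k}. V i (mvar i) ^ (?q - 2)) = ?C ^ (?q - 2) * ?P"
  proof -
    have "{1..<Suc k} = insert k {1..<k}" using step by auto
    then show ?thesis by simp
  qed
  show ?case
  proof
    fix j
    let ?Y = "V k (mvar j) :: 'a mpoly"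
    obtain u where u: "mpderiv l ?Y = ?P * u" using step.IH by (meson dvdE)
    obtain w where w: "mpderiv l ?C = ?P * w" using step.IH by (meson dvdE)
    have e1: "?q = Suc (?q - 1)" and e2: "?q - 1 = Suc (?q - 2)" using q2 by auto
    have dYq: "mpderiv l (?Y ^ ?q) = 0"
      by (subst e1, subst mpderiv_power, subst e1[symmetric]) (simp add: of_nat_card_mpoly)
    have dC: "mpderiv l (?C ^ (?q - 1)) = of_nat (?q - 1) * ?C ^ (?q - 2) * mpderiv l ?C"
      by (subst e2, subst mpderiv_power, subst e2[symmetric]) simp
    have Cp: "?C ^ (?q - 1) = ?C ^ (?q - 2) * ?C"
      by (subst e2) (simp add: mult.commute)
    have dprod: "mpderiv l (?C^(?q-1) * ?Y) = of_nat (?q-1) * ?C^(?q-2) * mpderiv l ?C * ?Y + ?C^(?q-2) * ?C * mpderiv l ?Y"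
      by (subst leibniz, subst dC, subst Cp, rule refl)
    have "mpderiv l (V (Suc k) (mvar j)) = mpderiv l (?Y ^ ?q) - mpderiv l (?C ^ (?q - 1) * ?Y)"
      using V_rec'[OF step.hyps(1), of "mvar j :: 'a mpoly"] by (simp add: mpderiv_diff)
    also have "\<dots> = - (of_nat (?q - 1) * ?C ^ (?q - 2) * mpderiv l ?C * ?Y + ?C ^ (?q - 2) * ?C * mpderiv l ?Y)"
      by (simp only: dYq dprod diff_0)
    also have "\<dots> = (?C ^ (?q - 2) * ?P) * (- (of_nat (?q - 1) * w * ?Y + ?C * u))"
      by (simp add: u w algebra_simps)
    finally have fin: "mpderiv l (V (Suc k) (mvar j)) = (?C ^ (?q - 2) * ?P) * (- (of_nat (?q - 1) * w * ?Y + ?C * u))" .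
    show "(\<Prod>i\<in>{1..<Suc k}. V i (mvar i) ^ (?q - 2)) dvd mpderiv l (V (Suc k) (mvar j) :: 'a mpoly)"
      unfolding Pk by (rule dvdI[OF fin])
  qed
qed


theorem lemma6p7:
  fixes n k l :: nat
  assumes "k \<in> {1..n}" and "l \<in> {1..n}"
  shows "(\<Prod>i\<in>{1..<k}. fk TYPE('a::{field,finite}) i ^ (card (UNIV :: 'a set) - 2))
           dvd mpderiv l (fk TYPE('a) k)"
proof -
  have k1: "1 \<le> k" using assms(1) by simp
  have "(\<Prod>i\<in>{1..<k}. V i (mvar i) ^ (CARD('a) - 2)) dvd mpderiv l (V k (mvar k) :: 'a mpoly)"
    using main[OF k1, of l] by blast
  then show ?thesis by (simp add: fk_V)
qed

end
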